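(* Let $k,t$ be integers with $k\geq t\geq 1$. Then there exists a connected graph $G=G_{k,t}$ with $\Delta(G)=2t^2+1$ and $\operatorname{diam}(G)=2t^2+1+k$ such that $prc(G)\geq rc(G)+t$.
   Context: A path in an edge-coloured graph is a rainbow path if its edges receive pairwise distinct colours. The rainbow connection number $rc(G)$ of a connected graph $G$ is the minimum number of colours in an edge-colouring such that every two distinct vertices are joined by a rainbow path. The proper rainbow connection number $prc(G)$ is the minimum number of colours in a proper edge-colouring (adjacent edges get distinct colours) such that every two distinct vertices are joined by a rainbow path. $\Delta(G)$ is the maximum degree and $\operatorname{diam}(G)$ the diameter. *)

theory Defs
  imports Main
begin

definition simple_graph :: "'a set \<Rightarrow> 'a set set \<Rightarrow> bool" where
  "simple_graph V E \<longleftrightarrow> finite V \<and> (\<forall>e\<in>E. \<exists>u v. e = {u, v} \<and> u \<in> V \<and> v \<in> V \<and> u \<noteq> v)"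

definition is_path :: "'a set \<Rightarrow> 'a set set \<Rightarrow> 'a list \<Rightarrow> 'a \<Rightarrow> 'a \<Rightarrow> bool" where
  "is_path V E p u v \<longleftrightarrow> p \<noteq> [] \<and> hd p = u \<and> last p = v \<and> distinct p \<and> set p \<subseteq> V
     \<and> (\<forall>i. Suc i < length p \<longrightarrow> {p ! i, p ! Suc i} \<in> E)"

definition path_edges :: "'a list \<Rightarrow> 'a set list" where
  "path_edges p = map (\<lambda>i. {p ! i, p ! Suc i}) [0..<length p - 1]"

definition graph_connected :: "'a set \<Rightarrow> 'a set set \<Rightarrow> bool" where
  "graph_connected V E \<longleftrightarrow> V \<noteq> {} \<and> (\<forall>u\<in>V. \<forall>v\<in>V. \<exists>p. is_path V E p u v)"

definition degree :: "'a set set \<Rightarrow> 'a \<Rightarrow> nat" where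
  "degree E v = card {e \<in> E. v \<in> e}"

definition max_degree :: "'a set \<Rightarrow> 'a set set \<Rightarrow> nat" where
  "max_degree V E = Max (degree E ` V)"

definition gdist :: "'a set \<Rightarrow> 'a set set \<Rightarrow> 'a \<Rightarrow> 'a \<Rightarrow> nat" where
  "gdist V E u v = (LEAST n. \<exists>p. is_path V E p u v \<and> length p - 1 = n)"

definition diam :: "'a set \<Rightarrow> 'a set set \<Rightarrow> nat" where
  "diam V E = Max {gdist V E u v | u v. u \<in> V \<and> v \<in> V}"

definition rainbow_path :: "('a set \<Rightarrow> nat) \<Rightarrow> 'a list \<Rightarrow> bool" where
  "rainbow_path c p \<longleftrightarrow> distinct (map c (path_edges p))"

definition rainbow_connected :: "'a set \<Rightarrow> 'a set set \<Rightarrow> ('a set \<Rightarrow> nat) \<Rightarrow> bool" where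
  "rainbow_connected V E c \<longleftrightarrow>
     (\<forall>u\<in>V. \<forall>v\<in>V. u \<noteq> v \<longrightarrow> (\<exists>p. is_path V E p u v \<and> rainbow_path c p))"

definition proper_colouring :: "'a set set \<Rightarrow> ('a set \<Rightarrow> nat) \<Rightarrow> bool" where
  "proper_colouring E c \<longleftrightarrow> (\<forall>e\<in>E. \<forall>f\<in>E. e \<noteq> f \<and> e \<inter> f \<noteq> {} \<longrightarrow> c e \<noteq> c f)"

definition rc :: "'a set \<Rightarrow> 'a set set \<Rightarrow> nat" where
  "rc V E = (LEAST k. \<exists>c. c ` E \<subseteq> {..<k} \<and> rainbow_connected V E c)"

definition prc :: "'a set \<Rightarrow> 'a set set \<Rightarrow> nat" where
  "prc V E = (LEAST k. \<exists>c. c ` E \<subseteq> {..<k} \<and> proper_colouring E c \<and> rainbow_connected V E c)"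

end

theory Submission
  imports Defs
begin
lemma path_edges_Nil[simp]: "path_edges [] = []"
  by (simp add: path_edges_def)
lemma path_edges_single[simp]: "path_edges [a] = []"
  by (simp add: path_edges_def)
lemma path_edges_Cons2[simp]: "path_edges (a # b # p) = {a,b} # path_edges (b # p)"
  unfolding path_edges_def
  by (simp add: upt_conv_Cons map_Suc_upt[symmetric] del: upt_Suc)

lemma length_path_edges: "length (path_edges p) = length p - 1"
  by (simp add: path_edges_def)

lemma is_path_single[simp]: "is_path V E [a] u v \<longleftrightarrow> a = u \<and> a = v \<and> a \<in> V"
  by (auto simp: is_path_def)

lemma is_path_Cons2[simp]: "is_path V E (a # b # p) u v \<longleftrightarrow>
   a = u \<and> a \<in> V \<and> a \<notin> set (b # p) \<and> {a,b} \<in> E \<and> is_path V E (b # p) b v"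
proof -
  have "(\<forall>i. Suc i < length (a # b # p) \<longrightarrow> {(a#b#p) ! i, (a#b#p) ! Suc i} \<in> E)
     \<longleftrightarrow> {a,b} \<in> E \<and> (\<forall>i. Suc i < length (b # p) \<longrightarrow> {(b#p) ! i, (b#p) ! Suc i} \<in> E)"
    (is "?L \<longleftrightarrow> ?R")
  proof
    assume ?L then show ?R
      by (metis Suc_less_eq length_Cons nth_Cons_0 nth_Cons_Suc zero_less_Suc)
  next
    assume r: ?R
    show ?L
    proof (intro allI impI)
      fix i assume "Suc i < length (a # b # p)"
      then show "{(a#b#p) ! i, (a#b#p) ! Suc i} \<in> E"
        using r by (cases i) auto
    qed
  qed
  then show ?thesis unfolding is_path_def by auto
qed

lemma path_edges_sub: "e \<in> set (path_edges p) \<Longrightarrow> e \<subseteq> set p"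
proof (induction p rule: induct_list012)
  case (3 a b p) then show ?case by auto
qed auto

lemma distinct_path_edges: "distinct p \<Longrightarrow> distinct (path_edges p)"
proof (induction p rule: induct_list012)
  case (3 a b p)
  have "{a,b} \<notin> set (path_edges (b # p))"
    using path_edges_sub[of "{a,b}" "b#p"] 3(3) by auto
  then show ?case using 3 by auto
qed auto

lemma path_edges_in_E: "is_path V E p u v \<Longrightarrow> set (path_edges p) \<subseteq> E"
  unfolding is_path_def path_edges_def by auto

lemma path_edges_snoc: "p \<noteq> [] \<Longrightarrow> path_edges (p @ [w]) = path_edges p @ [{last p, w}]"
proof (induction p rule: induct_list012)
  case (3 a b p) then show ?case by simp
qed auto

lemma path_edges_rev: "path_edges (rev p) = rev (path_edges p)"
proof (induction p rule: induct_list012)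
  case (3 a b p)
  have "path_edges (rev (a # b # p)) = path_edges (rev (b#p) @ [a])" by simp
  also have "\<dots> = path_edges (rev (b#p)) @ [{b, a}]"
    by (subst path_edges_snoc) (auto simp: last_rev)
  finally show ?case using 3 by (simp add: insert_commute)
qed auto

lemma is_path_rev: "is_path V E p u v \<Longrightarrow> is_path V E (rev p) v u"
proof -
  assume a: "is_path V E p u v"
  have "{rev p ! i, rev p ! Suc i} \<in> E" if "Suc i < length p" for i
  proof -
    have "{p ! (length p - Suc (Suc i)), p ! Suc (length p - Suc (Suc i))} \<in> E"
      using a that unfolding is_path_def by (metis Suc_diff_Suc diff_less lessI less_trans zero_less_Suc)
    moreover have "Suc (length p - Suc (Suc i)) = length p - Suc i" using that by simp
    ultimately show ?thesis using that by (simp add: rev_nth insert_commute)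
  qed
  then show ?thesis using a unfolding is_path_def by (auto simp: hd_rev last_rev)
qed

lemma rainbow_rev: "rainbow_path c (rev p) \<longleftrightarrow> rainbow_path c p"
  by (simp add: rainbow_path_def path_edges_rev rev_map[symmetric])

lemma is_path_snoc: "is_path V E p u v \<Longrightarrow> {v,w} \<in> E \<Longrightarrow> w \<in> V \<Longrightarrow> w \<notin> set p \<Longrightarrow> is_path V E (p @ [w]) u w"
  unfolding is_path_def
  apply (auto simp: nth_append)
  by (metis One_nat_def Suc_lessI diff_Suc_1 last_conv_nth length_greater_0_conv less_irrefl_nat not_less_eq)

lemma crossing:
  fixes f :: "'a \<Rightarrow> nat"
  shows "p \<noteq> [] \<Longrightarrow> f (hd p) \<le> i \<Longrightarrow> i < f (last p) \<Longrightarrow> \<exists>a b. {a,b} \<in> set (path_edges p) \<and> f a \<le> i \<and> i < f b"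
proof (induction p rule: induct_list012)
  case (3 a b p)
  show ?case
  proof (cases "i < f b")
    case True then show ?thesis using 3 by auto
  next
    case False then show ?thesis using 3(2)[of] 3(5) by auto
  qed
qed auto

definition Vg :: "nat \<Rightarrow> nat \<Rightarrow> nat set" where "Vg L T = {..<L+1+2*T}"
definition Eg :: "nat \<Rightarrow> nat \<Rightarrow> nat set set" where
  "Eg L T = {{i, Suc i} | i. i < L} \<union> {{L, L+1+j} | j. j<T} \<union> {{L, L+1+T+j} | j. j<T}
             \<union> {{L+1+j, L+1+T+j} | j. j<T}"
definition col :: "nat \<Rightarrow> nat \<Rightarrow> nat set \<Rightarrow> nat" where
  "col L T e = (if Max e \<le> L then Min e else if Min e = L then (if L+1+T \<le> Max e then (if T = 1 then L else L+1) else L) else 0)"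

lemma col_pair[simp]: "col L T {a,b} = (if max a b \<le> L then min a b else if min a b = L then (if L+1+T \<le> max a b then (if T = 1 then L else L+1) else L) else 0)"
  unfolding col_def by simp

lemma path_upt:
  assumes "i \<le> j" "j \<le> L"
  shows "is_path (Vg L T) (Eg L T) [i..<Suc j] i j"
  unfolding is_path_def Vg_def Eg_def using assms
  by (auto simp: hd_upt last_upt simp del: upt_Suc)

lemma path_edges_upt: "path_edges [i..<Suc j] = map (\<lambda>m. {m, Suc m}) [i..<j]"
  by (rule nth_equalityI) (auto simp: path_edges_def simp del: upt_Suc)

lemma rainbow_upt: "j \<le> L \<Longrightarrow> rainbow_path (col L T) [i..<Suc j]"
proof -
  assume "j \<le> L"
  then have "map (col L T) (path_edges [i..<Suc j]) = [i..<j]"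
    by (auto simp: path_edges_upt simp del: upt_Suc intro!: nth_equalityI)
  then show ?thesis by (simp add: rainbow_path_def)
qed

lemma E_path: "i < L \<Longrightarrow> {i, Suc i} \<in> Eg L T"
  unfolding Eg_def by blast
lemma E_Y: "L < y \<Longrightarrow> y < L+1+T \<Longrightarrow> {L, y} \<in> Eg L T"
  unfolding Eg_def by (rule UnI1, rule UnI1, rule UnI2) (auto intro!: exI[of _ "y - (L+1)"])
lemma E_Z: "L+1+T \<le> z \<Longrightarrow> z < L+1+2*T \<Longrightarrow> {L, z} \<in> Eg L T"
  unfolding Eg_def by (rule UnI1, rule UnI2) (auto intro!: exI[of _ "z - (L+1+T)"])
lemma E_YZ: "L < y \<Longrightarrow> y < L+1+T \<Longrightarrow> {y, y+T} \<in> Eg L T"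
  unfolding Eg_def by (rule UnI2) (auto intro!: exI[of _ "y - (L+1)"])

lemma short_paths_lt:
  assumes "2 \<le> L" "1 \<le> T" "u \<in> Vg L T" "v \<in> Vg L T" "u < v"
  shows "\<exists>p. is_path (Vg L T) (Eg L T) p u v \<and> rainbow_path (col L T) p \<and> length p \<le> L+2"
proof -
  have V: "x \<in> Vg L T \<longleftrightarrow> x < L+1+2*T" for x by (simp add: Vg_def)
  consider "v \<le> L" | "u \<le> L" "L < v" | "L < u" "v < L+1+T"
    | "L < u" "u < L+1+T" "v = u + T" | "L < u" "u < L+1+T" "L+1+T \<le> v" "v \<noteq> u+T"
    | "L+1+T \<le> u" using assms(5) by linarith
  then show ?thesis
  proof cases
    case 1
    then show ?thesis using assms path_upt[of u v L T] rainbow_upt[of v L T u]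
      by (intro exI[of _ "[u..<Suc v]"]) (simp del: upt_Suc)
  next
    case 2
    let ?p = "[u..<Suc L] @ [v]"
    have e: "{L, v} \<in> Eg L T"
      using 2 assms by (cases "v < L+1+T") (auto simp: V intro: E_Y E_Z)
    have pu: "is_path (Vg L T) (Eg L T) [u..<Suc L] u L"
      using 2 by (intro path_upt) auto
    have "is_path (Vg L T) (Eg L T) ?p u v"
      using is_path_snoc[OF pu e] 2 assms by (simp del: upt_Suc)
    moreover have "rainbow_path (col L T) ?p"
    proof -
      have "path_edges ?p = map (\<lambda>m. {m, Suc m}) [u..<L] @ [{L, v}]"
        using 2 by (subst path_edges_snoc) (auto simp: path_edges_upt simp del: upt_Suc)
      moreover have "map (col L T) (map (\<lambda>m. {m, Suc m}) [u..<L]) = [u..<L]"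
        by (auto intro!: nth_equalityI)
      moreover have "col L T {L, v} \<ge> L" using 2 by auto
      ultimately show ?thesis unfolding rainbow_path_def by auto
    qed
    moreover have "length ?p \<le> L + 2" by simp
    ultimately show ?thesis by blast
  next
    case 3
    let ?p = "[u, u+T, L, v]"
    have "is_path (Vg L T) (Eg L T) ?p u v"
      using 3 assms by (auto simp: V insert_commute intro: E_Y E_Z E_YZ)
    moreover have "rainbow_path (col L T) ?p"
      using 3 assms by (auto simp: rainbow_path_def)
    ultimately show ?thesis using assms by (intro exI[of _ ?p]) simp
  next
    case 4
    let ?p = "[u, v]"
    have "is_path (Vg L T) (Eg L T) ?p u v"
      using 4 assms by (auto simp: V insert_commute intro: E_Y E_Z E_YZ)
    moreover have "rainbow_path (col L T) ?p"
      using 4 assms by (auto simp: rainbow_path_def)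
    ultimately show ?thesis using assms by (intro exI[of _ ?p]) simp
  next
    case 5
    let ?p = "[u, L, v]"
    have "is_path (Vg L T) (Eg L T) ?p u v"
      using 5 assms by (auto simp: V insert_commute intro: E_Y E_Z E_YZ)
    moreover have "rainbow_path (col L T) ?p"
      using 5 assms by (auto simp: rainbow_path_def V)
    ultimately show ?thesis using assms by (intro exI[of _ ?p]) simp
  next
    case 6
    let ?p = "[u, u-T, L, v]"
    have "{u - T, u} \<in> Eg L T" using E_YZ[of L "u-T" T] 6 assms(3) by (auto simp: V)
    then have "is_path (Vg L T) (Eg L T) ?p u v"
      using 6 assms by (auto simp: V insert_commute intro: E_Y E_Z E_YZ)
    moreover have "rainbow_path (col L T) ?p"
      using 6 assms by (auto simp: rainbow_path_def V)
    ultimately show ?thesis using assms by (intro exI[of _ ?p]) simp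
  qed
qed

lemma short_paths:
  assumes "2 \<le> L" "1 \<le> T" "u \<in> Vg L T" "v \<in> Vg L T" "u \<noteq> v"
  shows "\<exists>p. is_path (Vg L T) (Eg L T) p u v \<and> rainbow_path (col L T) p \<and> length p \<le> L+2"
proof (cases "u < v")
  case True then show ?thesis using short_paths_lt assms by blast
next
  case False
  then obtain p where "is_path (Vg L T) (Eg L T) p v u \<and> rainbow_path (col L T) p \<and> length p \<le> L+2"
    using short_paths_lt[of L T v u] assms by force
  then show ?thesis by (intro exI[of _ "rev p"]) (simp add: is_path_rev rainbow_rev)
qed

lemma path_facts:
  assumes L: "1 \<le> L" and p: "is_path (Vg L T) (Eg L T) p 0 u" and j: "j < T"
    and u: "u = L+1+j \<or> u = L+1+T+j"
  shows "\<forall>i<L. {i, Suc i} \<in> set (path_edges p)"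
    and "{L, L+1+j} \<in> set (path_edges p) \<or> {L, L+1+T+j} \<in> set (path_edges p)"
    and "\<exists>a. {a,u} \<in> set (path_edges p) \<and> (a = L \<or> a = (if u = L+1+j then L+1+T+j else L+1+j))"
proof -
  define f where "f x = (if x \<le> L then x else if x = L+1+j \<or> x = L+1+T+j then L+1 else L)" for x
  have ne: "p \<noteq> []" "hd p = 0" "last p = u" using p by (auto simp: is_path_def)
  have sub: "set (path_edges p) \<subseteq> Eg L T" using path_edges_in_E[OF p] .
  have fu: "f u = L+1" using u by (auto simp: f_def)
  show "\<forall>i<L. {i, Suc i} \<in> set (path_edges p)"
  proof (intro allI impI)
    fix i assume i: "i < L"
    obtain a b where ab: "{a,b} \<in> set (path_edges p)" "f a \<le> i" "i < f b"
      using crossing[OF ne(1), of f i] ne fu i by (auto simp: f_def)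
    have "{a,b} \<in> Eg L T" using ab sub by auto
    then have "{a,b} = {i, Suc i}" using ab i
      unfolding Eg_def f_def by (auto simp: doubleton_eq_iff split: if_splits)
    then show "{i, Suc i} \<in> set (path_edges p)" using ab by simp
  qed
  show "{L, L+1+j} \<in> set (path_edges p) \<or> {L, L+1+T+j} \<in> set (path_edges p)"
  proof -
    obtain a b where ab: "{a,b} \<in> set (path_edges p)" "f a \<le> L" "L < f b"
      using crossing[OF ne(1), of f L] ne fu by (auto simp: f_def)
    have "{a,b} \<in> Eg L T" using ab sub by auto
    then have "{a,b} = {L, L+1+j} \<or> {a,b} = {L, L+1+T+j}" using ab j
      unfolding Eg_def f_def by (auto simp: doubleton_eq_iff split: if_splits)
    then show ?thesis using ab by auto
  qed
  show "\<exists>a. {a,u} \<in> set (path_edges p) \<and> (a = L \<or> a = (if u = L+1+j then L+1+T+j else L+1+j))"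
  proof -
    define g where "g x = (if x = u then 1 else 0::nat)" for x
    obtain a b where ab: "{a,b} \<in> set (path_edges p)" "g a \<le> 0" "0 < g b"
      using crossing[OF ne(1), of g 0] ne u by (auto simp: g_def)
    have "{a,b} \<in> Eg L T" using ab sub by auto
    then have "b = u \<and> (a = L \<or> a = (if u = L+1+j then L+1+T+j else L+1+j))" using ab j u
      unfolding Eg_def g_def by (auto simp: doubleton_eq_iff split: if_splits)
    then show ?thesis using ab by auto
  qed
qed

lemma newcol:
  assumes L: "1 \<le> L" and p: "is_path (Vg L T) (Eg L T) p 0 u" and j: "j < T"
    and u: "u = L+1+j \<or> u = L+1+T+j" and rb: "rainbow_path c p"
    and e: "e \<in> set (path_edges p)" and ne: "\<not> e \<subseteq> {..L}"
  shows "c e \<notin> c ` ((\<lambda>i. {i, Suc i}) ` {..<L})"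
proof
  assume "c e \<in> c ` ((\<lambda>i. {i, Suc i}) ` {..<L})"
  then obtain i where i: "i < L" "c e = c {i, Suc i}" by auto
  have "{i, Suc i} \<in> set (path_edges p)" using path_facts(1)[OF L p j u] i by auto
  moreover have "inj_on c (set (path_edges p))" using rb by (simp add: rainbow_path_def distinct_map)
  ultimately have "e = {i, Suc i}" using i e by (auto dest: inj_onD)
  then show False using ne i by auto
qed

lemma inj_pc: "rainbow_path c p \<Longrightarrow> x \<in> set (path_edges p) \<Longrightarrow> y \<in> set (path_edges p) \<Longrightarrow> x \<noteq> y \<Longrightarrow> c x \<noteq> c y"
  by (auto simp: rainbow_path_def distinct_map dest: inj_onD)

lemma prc_lb:
  assumes L: "1 \<le> L" and T: "1 \<le> T" and pc: "proper_colouring (Eg L T) c"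
    and rc: "rainbow_connected (Vg L T) (Eg L T) c" and rng: "c ` Eg L T \<subseteq> {..<n}"
  shows "L + T \<le> n \<and> L + 2 \<le> n"
proof -
  let ?V = "Vg L T" and ?E = "Eg L T"
  define Pset where "Pset = (\<lambda>i. {i, Suc i}) ` {..<L}"
  have ex: "\<exists>p. is_path ?V ?E p 0 u \<and> rainbow_path c p" if "L < u" "u < L+1+2*T" for u
    using rc that unfolding rainbow_connected_def Vg_def by auto
  have "\<forall>j. \<exists>p. j < T \<longrightarrow> is_path ?V ?E p 0 (L+1+j) \<and> rainbow_path c p"
    using ex by auto
  then obtain P where P: "\<And>j. j < T \<Longrightarrow> is_path ?V ?E (P j) 0 (L+1+j) \<and> rainbow_path c (P j)"
    by metis
  obtain q where q: "is_path ?V ?E q 0 (L+1+T)" "rainbow_path c q" using ex[of "L+1+T"] T by auto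
  have PsetE: "Pset \<subseteq> ?E" unfolding Pset_def using E_path by blast
  have cardP: "card Pset = L" unfolding Pset_def
    by (subst card_image) (auto simp: inj_on_def doubleton_eq_iff)
  have P0: "is_path ?V ?E (P 0) 0 (L+1)" "rainbow_path c (P 0)" using P[of 0] T by auto
  have "Pset \<subseteq> set (path_edges (P 0))" unfolding Pset_def using path_facts(1)[OF L P0(1), of 0] T by auto
  moreover have "inj_on c (set (path_edges (P 0)))" using P0(2) by (simp add: rainbow_path_def distinct_map)
  ultimately have injP: "inj_on c Pset" by (rule inj_on_subset[rotated])
  have cardCP: "card (c ` Pset) = L" using injP cardP by (simp add: card_image)
  have finCP: "finite (c ` Pset)" unfolding Pset_def by simp
  have sub_n: "X \<subseteq> c ` ?E \<Longrightarrow> card X \<le> n" for X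
    using rng by (metis card_lessThan card_mono finite_lessThan subset_trans)
  have "\<forall>j. \<exists>e. j < T \<longrightarrow> e \<in> set (path_edges (P j)) \<and> (e = {L, L+1+j} \<or> e = {L, L+1+T+j})"
    using path_facts(2)[OF L] P by metis
  then have "\<exists>e. \<forall>j. j < T \<longrightarrow> e j \<in> set (path_edges (P j)) \<and> (e j = {L, L+1+j} \<or> e j = {L, L+1+T+j})"
    by (rule choice)
  then obtain e where e0: "\<forall>j. j < T \<longrightarrow> e j \<in> set (path_edges (P j)) \<and> (e j = {L, L+1+j} \<or> e j = {L, L+1+T+j})"
    by blast
  have e: "e j \<in> set (path_edges (P j)) \<and> (e j = {L, L+1+j} \<or> e j = {L, L+1+T+j})" if "j < T" for j
    using e0 that by simp
  have eE: "e j \<in> ?E" if "j < T" for j proof -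
    have "set (path_edges (P j)) \<subseteq> ?E" using path_edges_in_E[of ?V ?E "P j" 0 "L+1+j"] P[OF that] by simp
    then show ?thesis using e[OF that] by blast
  qed
  have enew: "c (e j) \<notin> c ` Pset" if "j < T" for j
    unfolding Pset_def using newcol[OF L _ that, of "P j" "L+1+j" c "e j"] P[OF that] e[OF that] by auto
  have einj: "inj_on (\<lambda>j. c (e j)) {..<T}"
  proof (rule inj_onI)
    fix j l assume jl: "j \<in> {..<T}" "l \<in> {..<T}" "c (e j) = c (e l)"
    show "j = l"
    proof (rule ccontr)
      assume "j \<noteq> l"
      then have "e j \<noteq> e l" using e[of j] e[of l] jl by (auto simp: doubleton_eq_iff)
      moreover have "L \<in> e j \<inter> e l" using e[of j] e[of l] jl by auto
      ultimately have "c (e j) \<noteq> c (e l)" using pc eE jl unfolding proper_colouring_def by blast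
      then show False using jl by simp
    qed
  qed
  have "card (c ` Pset \<union> (\<lambda>j. c (e j)) ` {..<T}) = L + T"
  proof -
    have d: "c ` Pset \<inter> (\<lambda>j. c (e j)) ` {..<T} = {}" using enew by (auto simp: image_iff) (metis)
    have "card ((\<lambda>j. c (e j)) ` {..<T}) = T" using einj by (simp add: card_image)
    then show ?thesis using card_Un_disjoint[OF finCP _ d] cardCP by simp
  qed
  moreover have "c ` Pset \<union> (\<lambda>j. c (e j)) ` {..<T} \<subseteq> c ` ?E" using PsetE eE by auto
  ultimately have b1: "L + T \<le> n" using sub_n by metis
  define A where "A = {L, L+1}"
  define B where "B = {L, L+1+T}"
  define C where "C = {L+1, L+1+T}"
  have ABC: "A \<in> ?E" "B \<in> ?E" "C \<in> ?E" unfolding A_def B_def C_def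
    using E_Y[of L "L+1" T] E_Z[of L T "L+1+T"] E_YZ[of L "L+1" T] T by auto
  have p1: "A \<in> set (path_edges (P 0)) \<or> B \<in> set (path_edges (P 0))"
    using path_facts(2)[OF L P0(1), of 0] T by (simp add: A_def B_def)
  have p2: "A \<in> set (path_edges (P 0)) \<or> C \<in> set (path_edges (P 0))"
    using path_facts(3)[OF L P0(1), of 0] T by (auto simp: A_def C_def insert_commute)
  have q1: "A \<in> set (path_edges q) \<or> B \<in> set (path_edges q)"
    using path_facts(2)[OF L q(1), of 0] T by (simp add: A_def B_def)
  have q2: "B \<in> set (path_edges q) \<or> C \<in> set (path_edges q)"
    using path_facts(3)[OF L q(1), of 0] T by (auto simp: B_def C_def insert_commute)
  have nP: "\<not> A \<subseteq> {..L}" "\<not> B \<subseteq> {..L}" "\<not> C \<subseteq> {..L}" unfolding A_def B_def C_def by auto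
  have newP: "c x \<notin> c ` Pset" if "x \<in> set (path_edges (P 0))" "\<not> x \<subseteq> {..L}" for x
    unfolding Pset_def using newcol[OF L P0(1), of 0] T P0(2) that by auto
  have newq: "c x \<notin> c ` Pset" if "x \<in> set (path_edges q)" "\<not> x \<subseteq> {..L}" for x
    unfolding Pset_def using newcol[OF L q(1), of 0] T q(2) that by auto
  have dif: "A \<noteq> B" "A \<noteq> C" "B \<noteq> C" unfolding A_def B_def C_def using T by (auto simp: doubleton_eq_iff)
  have "\<exists>x y. x \<noteq> y \<and> x \<notin> c ` Pset \<and> y \<notin> c ` Pset \<and> x \<in> c ` ?E \<and> y \<in> c ` ?E"
  proof (cases "A \<in> set (path_edges (P 0))")
    case True
    show ?thesis
    proof (cases "B \<in> set (path_edges q)")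
      case True2: True
      have "c A \<noteq> c B" using pc ABC dif unfolding proper_colouring_def A_def B_def by auto
      then show ?thesis using newP[OF True nP(1)] newq[OF True2 nP(2)] ABC by blast
    next
      case False
      then have "A \<in> set (path_edges q)" "C \<in> set (path_edges q)" using q1 q2 by auto
      then show ?thesis using newq nP inj_pc[OF q(2)] dif ABC by blast
    qed
  next
    case False
    then have "B \<in> set (path_edges (P 0))" "C \<in> set (path_edges (P 0))" using p1 p2 by auto
    then show ?thesis using newP nP inj_pc[OF P0(2)] dif ABC by blast
  qed
  then obtain x y where xy: "x \<noteq> y" "x \<notin> c ` Pset" "y \<notin> c ` Pset" "x \<in> c ` ?E" "y \<in> c ` ?E" by blast
  have "card (c ` Pset \<union> {x, y}) = L + 2"
    using xy cardCP finCP by (subst card_Un_disjoint) auto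
  moreover have "c ` Pset \<union> {x,y} \<subseteq> c ` ?E" using PsetE xy by auto
  ultimately have "L + 2 \<le> n" using sub_n by metis
  with b1 show ?thesis by simp
qed

lemma card2: "card {a, b} \<le> 2"
  by (metis card_2_iff card_insert_le card.empty card_insert_if finite.emptyI finite.insertI
      le_SucI numeral_2_eq_2 one_le_numeral insert_absorb2 card_1_singleton_iff card_Suc_eq le_refl)

lemma deg_L:
  assumes "1 \<le> L"
  shows "degree (Eg L T) L = 2*T+1"
proof -
  have eq: "{e \<in> Eg L T. L \<in> e} = insert {L-1, L} ((\<lambda>j. {L, L+1+j}) ` {..<T} \<union> (\<lambda>j. {L, L+1+T+j}) ` {..<T})"
  proof
    show "{e \<in> Eg L T. L \<in> e} \<subseteq> insert {L-1, L} ((\<lambda>j. {L, L+1+j}) ` {..<T} \<union> (\<lambda>j. {L, L+1+T+j}) ` {..<T})"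
      unfolding Eg_def by auto
    show "insert {L-1, L} ((\<lambda>j. {L, L+1+j}) ` {..<T} \<union> (\<lambda>j. {L, L+1+T+j}) ` {..<T}) \<subseteq> {e \<in> Eg L T. L \<in> e}"
      using assms E_path[of "L-1" L T] unfolding Eg_def by auto
  qed
  have i1: "inj_on (\<lambda>j. {L, L+1+j}) {..<T}" by (auto simp: inj_on_def doubleton_eq_iff)
  have i2: "inj_on (\<lambda>j. {L, L+1+T+j}) {..<T}" by (auto simp: inj_on_def doubleton_eq_iff)
  have d: "(\<lambda>j. {L, L+1+j}) ` {..<T} \<inter> (\<lambda>j. {L, L+1+T+j}) ` {..<T} = {}"
    by (auto simp: doubleton_eq_iff)
  have n: "{L-1, L} \<notin> (\<lambda>j. {L, L+1+j}) ` {..<T} \<union> (\<lambda>j. {L, L+1+T+j}) ` {..<T}"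
    by (auto simp: doubleton_eq_iff)
  have "card ((\<lambda>j. {L, L+1+j}) ` {..<T} \<union> (\<lambda>j. {L, L+1+T+j}) ` {..<T}) = T + T"
    using card_Un_disjoint[OF _ _ d] i1 i2 by (simp add: card_image)
  then show ?thesis unfolding degree_def eq using n by simp
qed

lemma deg_other:
  assumes "u \<in> Vg L T" "u \<noteq> L"
  shows "degree (Eg L T) u \<le> 2"
proof -
  have "\<exists>a b. {e \<in> Eg L T. u \<in> e} \<subseteq> {a, b}"
  proof (cases "u < L")
    case True
    then show ?thesis unfolding Eg_def
      by (intro exI[of _ "{u-1,u}"] exI[of _ "{u, Suc u}"]) (auto simp: doubleton_eq_iff)
  next
    case False
    show ?thesis
    proof (cases "u < L+1+T")
      case True
      then show ?thesis using False assms unfolding Eg_def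
        by (intro exI[of _ "{L,u}"] exI[of _ "{u, u+T}"]) (auto simp: doubleton_eq_iff)
    next
      case False2: False
      then show ?thesis using False assms unfolding Eg_def
        by (intro exI[of _ "{L,u}"] exI[of _ "{u-T, u}"]) (auto simp: doubleton_eq_iff)
    qed
  qed
  then obtain a b where "{e \<in> Eg L T. u \<in> e} \<subseteq> {a, b}" by blast
  then have "card {e \<in> Eg L T. u \<in> e} \<le> card {a,b}" by (intro card_mono) auto
  then show ?thesis unfolding degree_def using card2[of a b] by linarith
qed

lemma maxdeg:
  assumes "1 \<le> L" "1 \<le> T"
  shows "max_degree (Vg L T) (Eg L T) = 2*T+1"
  unfolding max_degree_def
proof (rule Max_eqI)
  show "finite (degree (Eg L T) ` Vg L T)" by (simp add: Vg_def)
  show "y \<le> 2*T+1" if "y \<in> degree (Eg L T) ` Vg L T" for y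
    using that deg_L[OF assms(1), of T] deg_other[of _ L T] assms by force
  show "2*T+1 \<in> degree (Eg L T) ` Vg L T"
    using deg_L[OF assms(1), of T] by (intro image_eqI[of _ _ L]) (auto simp: Vg_def)
qed

lemma gdist_le: "is_path V E p u v \<Longrightarrow> gdist V E u v \<le> length p - 1"
  unfolding gdist_def by (rule Least_le) blast

lemma finE: "finite (Eg L T)"
  unfolding Eg_def by (intro finite_UnI finite_image_set) auto

lemma gdist_lb:
  assumes "2 \<le> L" "1 \<le> T"
  shows "L + 1 \<le> gdist (Vg L T) (Eg L T) 0 (L+1)"
proof -
  have "\<exists>p. is_path (Vg L T) (Eg L T) p 0 (L+1)"
    using short_paths[OF assms, of 0 "L+1"] assms by (auto simp: Vg_def)
  then have "\<exists>n p. is_path (Vg L T) (Eg L T) p 0 (L+1) \<and> length p - 1 = n" by blast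
  then have "\<exists>p. is_path (Vg L T) (Eg L T) p 0 (L+1) \<and> length p - 1 = gdist (Vg L T) (Eg L T) 0 (L+1)"
    unfolding gdist_def by (rule LeastI_ex)
  then obtain p where p: "is_path (Vg L T) (Eg L T) p 0 (L+1)" "length p - 1 = gdist (Vg L T) (Eg L T) 0 (L+1)"
    by blast
  have L1: "1 \<le> L" using assms by simp
  have j: "(0::nat) < T" using assms by simp
  have s1: "(\<lambda>i. {i, Suc i}) ` {..<L} \<subseteq> set (path_edges p)" using path_facts(1)[OF L1 p(1) j] by auto
  obtain e where e: "e \<in> set (path_edges p)" "e = {L, L+1} \<or> e = {L, L+1+T}"
    using path_facts(2)[OF L1 p(1) j] by auto
  have ne: "e \<notin> (\<lambda>i. {i, Suc i}) ` {..<L}" using e(2) by (auto simp: doubleton_eq_iff)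
  have "card (insert e ((\<lambda>i. {i, Suc i}) ` {..<L})) = L + 1"
    using ne by (simp add: card_image inj_on_def doubleton_eq_iff)
  moreover have "card (insert e ((\<lambda>i. {i, Suc i}) ` {..<L})) \<le> card (set (path_edges p))"
    using s1 e by (intro card_mono) auto
  moreover have "distinct (path_edges p)" using p(1) distinct_path_edges by (auto simp: is_path_def)
  ultimately have "L + 1 \<le> length (path_edges p)" using distinct_card by fastforce
  then show ?thesis using p(2) by (simp add: length_path_edges)
qed

lemma diam_eq:
  assumes "2 \<le> L" "1 \<le> T"
  shows "diam (Vg L T) (Eg L T) = L + 1"
  unfolding diam_def
proof (rule Max_eqI)
  show "finite {gdist (Vg L T) (Eg L T) u v |u v. u \<in> Vg L T \<and> v \<in> Vg L T}"
    by (rule finite_image_set2) (auto simp: Vg_def)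
  show "y \<le> L + 1" if yin: "y \<in> {gdist (Vg L T) (Eg L T) u v |u v. u \<in> Vg L T \<and> v \<in> Vg L T}" for y
  proof -
    obtain u v where uv: "y = gdist (Vg L T) (Eg L T) u v" "u \<in> Vg L T" "v \<in> Vg L T" using yin by blast
    show ?thesis
    proof (cases "u = v")
      case True
      then have "is_path (Vg L T) (Eg L T) [u] u v" using uv by simp
      then show ?thesis using gdist_le uv(1) by fastforce
    next
      case False
      then obtain p where "is_path (Vg L T) (Eg L T) p u v" "length p \<le> L + 2"
        using short_paths[OF assms uv(2,3)] by blast
      then show ?thesis using gdist_le[of "Vg L T" "Eg L T" p u v] uv(1) by linarith
    qed
  qed
  have le: "gdist (Vg L T) (Eg L T) 0 (L+1) \<le> L + 1"
  proof -
    obtain p where "is_path (Vg L T) (Eg L T) p 0 (L+1)" "length p \<le> L + 2"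
      using short_paths[OF assms, of 0 "L+1"] assms by (auto simp: Vg_def)
    then show ?thesis using gdist_le[of "Vg L T" "Eg L T" p 0 "L+1"] by linarith
  qed
  show "L + 1 \<in> {gdist (Vg L T) (Eg L T) u v |u v. u \<in> Vg L T \<and> v \<in> Vg L T}"
    using le gdist_lb[OF assms] assms by (intro CollectI exI[of _ 0] exI[of _ "L+1"]) (auto simp: Vg_def)
qed

lemma rc_ub:
  assumes "2 \<le> L" "1 \<le> T"
  shows "rc (Vg L T) (Eg L T) \<le> L + (if T = 1 then 1 else 2)"
  unfolding rc_def
proof (rule Least_le, intro exI conjI)
  show "col L T ` Eg L T \<subseteq> {..<L + (if T = 1 then 1 else 2)}"
    unfolding Eg_def using assms by auto
  show "rainbow_connected (Vg L T) (Eg L T) (col L T)"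
    unfolding rainbow_connected_def using short_paths[OF assms] by blast
qed

lemma prc_ex:
  assumes "2 \<le> L" "1 \<le> T"
  shows "\<exists>n c. c ` Eg L T \<subseteq> {..<n} \<and> proper_colouring (Eg L T) c \<and> rainbow_connected (Vg L T) (Eg L T) c"
proof -
  obtain f :: "nat set \<Rightarrow> nat" and m where f: "f ` Eg L T = {i. i < m}" "inj_on f (Eg L T)"
    using finite_imp_inj_to_nat_seg[OF finE] by blast
  have "proper_colouring (Eg L T) f" using f(2) unfolding proper_colouring_def by (auto dest: inj_onD)
  moreover have "rainbow_connected (Vg L T) (Eg L T) f"
    unfolding rainbow_connected_def
  proof (intro ballI impI)
    fix u v assume uv: "u \<in> Vg L T" "v \<in> Vg L T" "u \<noteq> v"
    then obtain p where p: "is_path (Vg L T) (Eg L T) p u v" using short_paths[OF assms] by blast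
    have "distinct (path_edges p)" using p distinct_path_edges by (auto simp: is_path_def)
    moreover have "inj_on f (set (path_edges p))" using f(2) path_edges_in_E[OF p] inj_on_subset by blast
    ultimately have "rainbow_path f p" by (simp add: rainbow_path_def distinct_map)
    then show "\<exists>p. is_path (Vg L T) (Eg L T) p u v \<and> rainbow_path f p" using p by blast
  qed
  moreover have "f ` Eg L T \<subseteq> {..<m}" using f(1) by auto
  ultimately show ?thesis by blast
qed

lemma prc_lb2:
  assumes "2 \<le> L" "1 \<le> T"
  shows "L + T \<le> prc (Vg L T) (Eg L T) \<and> L + 2 \<le> prc (Vg L T) (Eg L T)"
proof -
  have "\<exists>c. c ` Eg L T \<subseteq> {..<prc (Vg L T) (Eg L T)} \<and> proper_colouring (Eg L T) c \<and> rainbow_connected (Vg L T) (Eg L T) c"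
    unfolding prc_def using prc_ex[OF assms] by (rule LeastI_ex)
  then obtain c where "c ` Eg L T \<subseteq> {..<prc (Vg L T) (Eg L T)}" "proper_colouring (Eg L T) c" "rainbow_connected (Vg L T) (Eg L T) c"
    by blast
  then show ?thesis using prc_lb[of L T c] assms by simp
qed

lemma sg_lemma: "simple_graph (Vg L T) (Eg L T)"
  unfolding simple_graph_def
proof (intro conjI ballI)
  show "finite (Vg L T)" by (simp add: Vg_def)
  fix e assume "e \<in> Eg L T"
  then consider (a) i where "e = {i, Suc i}" "i < L" | (b) j where "e = {L, L+1+j}" "j < T"
    | (c) j where "e = {L, L+1+T+j}" "j < T" | (d) j where "e = {L+1+j, L+1+T+j}" "j < T"
    unfolding Eg_def by blast
  then show "\<exists>u v. e = {u, v} \<and> u \<in> Vg L T \<and> v \<in> Vg L T \<and> u \<noteq> v"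
  proof cases
    case a then show ?thesis by (intro exI[of _ i] exI[of _ "Suc i"]) (simp add: Vg_def)
  next
    case b then show ?thesis by (intro exI[of _ L] exI[of _ "L+1+j"]) (simp add: Vg_def)
  next
    case c then show ?thesis by (intro exI[of _ L] exI[of _ "L+1+T+j"]) (simp add: Vg_def)
  next
    case d then show ?thesis by (intro exI[of _ "L+1+j"] exI[of _ "L+1+T+j"]) (simp add: Vg_def)
  qed
qed

theorem theorem3p4:
  fixes k t :: nat
  assumes "1 \<le> t" and "t \<le> k"
  shows "\<exists>(V :: nat set) E. simple_graph V E \<and> graph_connected V E
           \<and> max_degree V E = 2 * t^2 + 1
           \<and> diam V E = 2 * t^2 + 1 + k
           \<and> prc V E \<ge> rc V E + t"
proof -
  define T where "T = t^2"
  define L where "L = 2 * t^2 + k"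
  have T1: "1 \<le> T" using assms by (simp add: T_def)
  have L2: "2 \<le> L" using T1 assms unfolding L_def T_def by linarith
  have sg: "simple_graph (Vg L T) (Eg L T)" using sg_lemma .
  have con: "graph_connected (Vg L T) (Eg L T)"
    unfolding graph_connected_def
  proof (intro conjI ballI)
    show "Vg L T \<noteq> {}" by (auto simp: Vg_def)
    fix u v assume uv: "u \<in> Vg L T" "v \<in> Vg L T"
    show "\<exists>p. is_path (Vg L T) (Eg L T) p u v"
    proof (cases "u = v")
      case True then show ?thesis using uv by (intro exI[of _ "[u]"]) simp
    next
      case False then show ?thesis using short_paths[OF L2 T1 uv] by blast
    qed
  qed
  have md: "max_degree (Vg L T) (Eg L T) = 2 * t^2 + 1" using maxdeg[of L T] L2 T1 by (simp add: T_def)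
  have dm: "diam (Vg L T) (Eg L T) = 2 * t^2 + 1 + k" using diam_eq[OF L2 T1] by (simp add: L_def)
  have r: "rc (Vg L T) (Eg L T) \<le> L + (if T = 1 then 1 else 2)" using rc_ub[OF L2 T1] .
  have p: "L + T \<le> prc (Vg L T) (Eg L T) \<and> L + 2 \<le> prc (Vg L T) (Eg L T)" using prc_lb2[OF L2 T1] .
  have gap: "rc (Vg L T) (Eg L T) + t \<le> prc (Vg L T) (Eg L T)"
  proof (cases "t = 1")
    case True
    then have "T = 1" by (simp add: T_def)
    then show ?thesis using r p True by simp
  next
    case False
    then have t2: "2 \<le> t" using assms by simp
    then have "T \<ge> t + 2"
    proof -
      have m: "2 * t \<le> t * t" using mult_le_mono1[OF t2, of t] .
      then show ?thesis using t2 unfolding T_def power2_eq_square by linarith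
    qed
    moreover have "T \<noteq> 1" using t2 \<open>T \<ge> t + 2\<close> by simp
    ultimately show ?thesis using r p by simp
  qed
  show ?thesis using sg con md dm gap by blast
qed

end
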